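(* Let $X$ be a Hausdorff space and define $\Phi(X)=\sup\{L(X\setminus\{x\}) : x\in X\}$. Then $\Phi(X)=L(X)\cdot\psi(X)$.
   Context: $L(Y)$ denotes the Lindelöf number of $Y$ (least infinite cardinal $\mu$ such that every open cover of $Y$ has a subcover of size at most $\mu$), and $\psi(Y)$ the pseudocharacter (least infinite $\mu$ such that every point of $Y$ is the intersection of at most $\mu$ open sets); $X\setminus\{x\}$ carries the subspace topology. All cardinal functions are taken to be infinite. *)

theory Defs
  imports "HOL-Analysis.Analysis"
begin

text \<open>Cardinals are represented as cardinal orders (HOL BNF cardinals). An infinite
cardinal is a cardinal order with infinite field.\<close>

definition inf_card :: "'k rel \<Rightarrow> bool" where
  "inf_card \<kappa> \<longleftrightarrow> Card_order \<kappa> \<and> infinite (Field \<kappa>)"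

definition lindelof_le :: "'a topology \<Rightarrow> 'k rel \<Rightarrow> bool" where
  "lindelof_le Y \<kappa> \<longleftrightarrow>
     (\<forall>U. (\<forall>u\<in>U. openin Y u) \<and> topspace Y \<subseteq> \<Union>U \<longrightarrow>
        (\<exists>V\<subseteq>U. topspace Y \<subseteq> \<Union>V \<and> ordLeq3 (card_of V) \<kappa>))"

definition pseudochar_le :: "'a topology \<Rightarrow> 'k rel \<Rightarrow> bool" where
  "pseudochar_le Y \<kappa> \<longleftrightarrow>
     (\<forall>y\<in>topspace Y. \<exists>W. W \<noteq> {} \<and> (\<forall>w\<in>W. openin Y w) \<and> \<Inter>W = {y}
        \<and> ordLeq3 (card_of W) \<kappa>)"

definition is_lindelof_number :: "'a topology \<Rightarrow> 'k rel \<Rightarrow> bool" where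
  "is_lindelof_number Y \<mu> \<longleftrightarrow> inf_card \<mu> \<and> lindelof_le Y \<mu> \<and>
     (\<forall>\<kappa>::'k rel. inf_card \<kappa> \<and> lindelof_le Y \<kappa> \<longrightarrow> ordLeq3 \<mu> \<kappa>)"

definition is_pseudocharacter :: "'a topology \<Rightarrow> 'k rel \<Rightarrow> bool" where
  "is_pseudocharacter Y \<mu> \<longleftrightarrow> inf_card \<mu> \<and> pseudochar_le Y \<mu> \<and>
     (\<forall>\<kappa>::'k rel. inf_card \<kappa> \<and> pseudochar_le Y \<kappa> \<longrightarrow> ordLeq3 \<mu> \<kappa>)"

text \<open>mu is Phi(X) = sup { L(X - {x}) : x in X } (as an infinite cardinal): the least
infinite cardinal kappa with L(X - {x}) <= kappa for every x in X. For an infinite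
cardinal kappa, L(Y) <= kappa holds exactly when lindelof_le Y kappa, which is how the
upper-bound condition is expressed (this avoids requiring each L(X - {x}) to be
represented on the type 'k).\<close>
definition is_Phi :: "'a topology \<Rightarrow> 'k rel \<Rightarrow> bool" where
  "is_Phi X \<mu> \<longleftrightarrow>
     inf_card \<mu> \<and>
     (\<forall>x\<in>topspace X. lindelof_le (subtopology X (topspace X - {x})) \<mu>) \<and>
     (\<forall>\<kappa>::'k rel. inf_card \<kappa> \<and>
        (\<forall>x\<in>topspace X. lindelof_le (subtopology X (topspace X - {x})) \<kappa>)
        \<longrightarrow> ordLeq3 \<mu> \<kappa>)"

end

theory Submission
  imports Defs
begin
unbundle cardinal_syntax

lemma leq_Field: "Card_order k \<Longrightarrow> ( |A| \<le>o k) = ( |A| \<le>o |Field k| )"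
  by (meson card_of_Field_ordIso ordIso_symmetric ordLeq_ordIso_trans)

lemma insert_le: assumes "inf_card k" "|A| \<le>o k" shows "|insert a A| \<le>o k"
proof -
  have "|{a}| \<le>o k" using assms unfolding inf_card_def
    by (metis card_of_singl_ordLeq finite.emptyI leq_Field)
  then show ?thesis using card_of_Un_ordLeq_infinite_Field[of k "{a}" A] assms
    unfolding inf_card_def by simp
qed

lemma image_le: "|A| \<le>o k \<Longrightarrow> |f ` A| \<le>o k"
  using card_of_image ordLeq_transitive by blast

lemma UN_le: assumes "inf_card k" "|I| \<le>o k" "\<forall>i\<in>I. |A i| \<le>o k"
  shows "|\<Union>i\<in>I. A i| \<le>o k"
  using assms card_of_UNION_ordLeq_infinite[of "Field k" I A] leq_Field unfolding inf_card_def
  by metis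

lemma lind_mono: "lindelof_le Y k \<Longrightarrow> k \<le>o k' \<Longrightarrow> lindelof_le Y k'"
  unfolding lindelof_le_def using ordLeq_transitive by metis

lemma psi_mono: "pseudochar_le Y k \<Longrightarrow> k \<le>o k' \<Longrightarrow> pseudochar_le Y k'"
  unfolding pseudochar_le_def using ordLeq_transitive by metis

lemma keyK:
  assumes k: "inf_card k" and L: "lindelof_le X k" and P: "pseudochar_le X k"
  shows "lindelof_le (subtopology X (topspace X - {x})) k"
proof (cases "x \<in> topspace X")
  case False
  then have "topspace X - {x} = topspace X" by blast
  then have "subtopology X (topspace X - {x}) = X"
    by (simp only: subtopology_topspace)
  then show ?thesis using L by (simp only:)
next
  case True
  define S where "S = topspace X - {x}"
  from P[unfolded pseudochar_le_def, rule_format, OF True]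
  obtain W where W: "W \<noteq> {}" "\<forall>w\<in>W. openin X w" "\<Inter>W = {x}" "|W| \<le>o k"
    by blast
  show ?thesis unfolding lindelof_le_def
  proof (intro allI impI, elim conjE)
    fix U assume Uo: "\<forall>u\<in>U. openin (subtopology X (topspace X - {x})) u"
      and Uc: "topspace (subtopology X (topspace X - {x})) \<subseteq> \<Union>U"
    have Uc': "S \<subseteq> \<Union>U" using Uc by (auto simp: S_def)
    have "\<forall>w\<in>W. \<exists>V. V \<subseteq> insert w {t. openin X t \<and> t \<inter> S \<in> U} \<and> topspace X \<subseteq> \<Union>V \<and> |V| \<le>o k"
    proof
      fix w assume wW: "w \<in> W"
      let ?U' = "insert w {t. openin X t \<and> t \<inter> S \<in> U}"
      have xw: "x \<in> w" using W(3) wW by auto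
      have "topspace X \<subseteq> \<Union>?U'"
      proof
        fix z assume z: "z \<in> topspace X"
        show "z \<in> \<Union>?U'"
        proof (cases "z \<in> w")
          case True then show ?thesis by auto
        next
          case False
          then have "z \<in> S" using z xw S_def by auto
          then obtain u where u: "u \<in> U" "z \<in> u" using Uc' by auto
          then obtain t where "openin X t" "u = t \<inter> S"
            using Uo by (auto simp: openin_subtopology S_def)
          then show ?thesis using u by auto
        qed
      qed
      moreover have "\<forall>u\<in>?U'. openin X u" using W(2) wW by auto
      ultimately show "\<exists>V. V \<subseteq> ?U' \<and> topspace X \<subseteq> \<Union>V \<and> |V| \<le>o k"
        using L[unfolded lindelof_le_def, rule_format, of ?U'] by blast
    qed
    from bchoice[OF this] obtain Vf where Vf: "\<forall>w\<in>W. Vf w \<subseteq> insert w {t. openin X t \<and> t \<inter> S \<in> U} \<and> topspace X \<subseteq> \<Union>(Vf w) \<and> |Vf w| \<le>o k"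
      by blast
    define V where "V = (\<Union>w\<in>W. (\<lambda>t. t \<inter> S) ` (Vf w - {w}))"
    have "V \<subseteq> U" using Vf unfolding V_def by blast
    moreover have "topspace (subtopology X (topspace X - {x})) \<subseteq> \<Union>V"
    proof
      fix y assume "y \<in> topspace (subtopology X (topspace X - {x}))"
      then have y: "y \<in> S" by (auto simp: S_def)
      then obtain w where w: "w \<in> W" "y \<notin> w" using W(3) S_def by auto
      then obtain v where v: "v \<in> Vf w" "y \<in> v" using Vf y S_def by blast
      then have "v \<noteq> w" using w by auto
      then show "y \<in> \<Union>V" using v w y unfolding V_def by blast
    qed
    moreover have "|V| \<le>o k" unfolding V_def
    proof (rule UN_le[OF k W(4)], intro ballI)
      fix w assume "w \<in> W"
      then have "|Vf w| \<le>o k" using Vf by blast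
      then have "|Vf w - {w}| \<le>o k"
        using card_of_mono1[of "Vf w - {w}" "Vf w"] ordLeq_transitive by blast
      then show "|(\<lambda>t. t \<inter> S) ` (Vf w - {w})| \<le>o k" by (rule image_le)
    qed
    ultimately show "\<exists>V\<subseteq>U. topspace (subtopology X (topspace X - {x})) \<subseteq> \<Union>V \<and> |V| \<le>o k"
      by blast
  qed
qed


lemma PhiL:
  assumes "inf_card k" "\<forall>x\<in>topspace X. lindelof_le (subtopology X (topspace X - {x})) k"
  shows "lindelof_le X k"
  unfolding lindelof_le_def
proof (intro allI impI, elim conjE)
  fix U assume Uo: "\<forall>u\<in>U. openin X u" and Uc: "topspace X \<subseteq> \<Union>U"
  show "\<exists>V\<subseteq>U. topspace X \<subseteq> \<Union>V \<and> |V| \<le>o k"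
  proof (cases "topspace X = {}")
    case True
    show ?thesis
    proof (intro exI[of _ "{}"] conjI)
      show "|{}| \<le>o k" using assms(1) unfolding inf_card_def
        using leq_Field card_of_empty by blast
    qed (use True in auto)
  next
    case False
    then obtain x where x: "x \<in> topspace X" by blast
    define S where "S = topspace X - {x}"
    let ?g = "\<lambda>u. u \<inter> S"
    have A: "\<forall>u\<in>?g ` U. openin (subtopology X S) u" using Uo
      by (auto simp: openin_subtopology)
    have B: "topspace (subtopology X S) \<subseteq> \<Union>(?g ` U)" using Uc by (auto simp: S_def)
    have LS: "lindelof_le (subtopology X S) k" using assms(2) x unfolding S_def by blast
    obtain V0 where V0: "V0 \<subseteq> ?g ` U" "topspace (subtopology X S) \<subseteq> \<Union>V0" "|V0| \<le>o k"
      using LS[unfolded lindelof_le_def, rule_format, of "?g ` U"] A B by blast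
    then obtain V1 where V1: "V1 \<subseteq> U" "inj_on ?g V1" "V0 = ?g ` V1"
      by (meson subset_image_inj)
    have "|V1| \<le>o |V0|" unfolding card_of_ordLeq[symmetric]
      using V1 by blast
    then have "|V1| \<le>o k" using V0(3) by (rule ordLeq_transitive)
    obtain u0 where u0: "u0 \<in> U" "x \<in> u0" using Uc x by auto
    have "|insert u0 V1| \<le>o k" by (rule insert_le[OF assms(1) \<open>|V1| \<le>o k\<close>])
    moreover have "insert u0 V1 \<subseteq> U" using u0 V1 by auto
    moreover have "topspace X \<subseteq> \<Union>(insert u0 V1)"
    proof
      fix z assume z: "z \<in> topspace X"
      show "z \<in> \<Union>(insert u0 V1)"
      proof (cases "z = x")
        case True then show ?thesis using u0 by auto
      next
        case False
        then have "z \<in> topspace (subtopology X S)" using z by (auto simp: S_def)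
        then show ?thesis using V0(2) V1(3) by auto
      qed
    qed
    ultimately show ?thesis by blast
  qed
qed

lemma PhiP:
  assumes H: "Hausdorff_space X" and k: "inf_card k"
    and L: "\<forall>x\<in>topspace X. lindelof_le (subtopology X (topspace X - {x})) k"
  shows "pseudochar_le X k"
  unfolding pseudochar_le_def
proof
  fix x assume x: "x \<in> topspace X"
  define S where "S = topspace X - {x}"
  have "\<forall>y\<in>S. \<exists>p. openin X (fst p) \<and> openin X (snd p) \<and> x \<in> fst p \<and> y \<in> snd p \<and> disjnt (fst p) (snd p)"
  proof
    fix y assume "y \<in> S"
    then obtain A B where "openin X A" "openin X B" "x \<in> A" "y \<in> B" "disjnt A B"
      using H[unfolded Hausdorff_space_def, rule_format, of x y] x by (auto simp: S_def)
    then show "\<exists>p. openin X (fst p) \<and> openin X (snd p) \<and> x \<in> fst p \<and> y \<in> snd p \<and> disjnt (fst p) (snd p)"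
      by (intro exI[of _ "(A,B)"]) simp
  qed
  from bchoice[OF this] obtain p where p: "\<forall>y\<in>S. openin X (fst (p y)) \<and> openin X (snd (p y)) \<and> x \<in> fst (p y) \<and> y \<in> snd (p y) \<and> disjnt (fst (p y)) (snd (p y))"
    by blast
  let ?g = "\<lambda>y. snd (p y) \<inter> S"
  have A: "\<forall>u\<in>?g ` S. openin (subtopology X S) u" using p
    by (auto simp: openin_subtopology)
  have B: "topspace (subtopology X S) \<subseteq> \<Union>(?g ` S)" using p by (auto simp: S_def)
  have LS: "lindelof_le (subtopology X S) k" using L x unfolding S_def by blast
  obtain V0 where V0: "V0 \<subseteq> ?g ` S" "topspace (subtopology X S) \<subseteq> \<Union>V0" "|V0| \<le>o k"
    using LS[unfolded lindelof_le_def, rule_format, of "?g ` S"] A B by blast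
  then obtain Y0 where Y0: "Y0 \<subseteq> S" "inj_on ?g Y0" "V0 = ?g ` Y0"
    by (meson subset_image_inj)
  have "|Y0| \<le>o |V0|" unfolding card_of_ordLeq[symmetric]
    using Y0 by blast
  then have "|Y0| \<le>o k" using V0(3) by (rule ordLeq_transitive)
  define W where "W = insert (topspace X) ((\<lambda>y. fst (p y)) ` Y0)"
  have "|W| \<le>o k" unfolding W_def
    by (rule insert_le[OF k image_le[OF \<open>|Y0| \<le>o k\<close>]])
  moreover have "W \<noteq> {}" unfolding W_def by simp
  moreover have "\<forall>w\<in>W. openin X w" unfolding W_def using p Y0(1) by auto
  moreover have "\<Inter>W = {x}"
  proof
    show "{x} \<subseteq> \<Inter>W" unfolding W_def using p Y0(1) x by auto
    show "\<Inter>W \<subseteq> {x}"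
    proof
      fix z assume z: "z \<in> \<Inter>W"
      then have zt: "z \<in> topspace X" unfolding W_def by auto
      show "z \<in> {x}"
      proof (rule ccontr)
        assume "z \<notin> {x}"
        then have "z \<in> topspace (subtopology X S)" using zt by (auto simp: S_def)
        then obtain y where y: "y \<in> Y0" "z \<in> snd (p y)" using V0(2) Y0(3) by auto
        then have "z \<in> fst (p y)" using z unfolding W_def by auto
        then show False using p y Y0(1) unfolding disjnt_def by blast
      qed
    qed
  qed
  ultimately show "\<exists>W. W \<noteq> {} \<and> (\<forall>w\<in>W. openin X w) \<and> \<Inter>W = {x} \<and> |W| \<le>o k"
    by blast
qed

theorem lemma2p1:
  fixes X :: "'a topology" and \<mu>L \<mu>P \<Phi> :: "'k rel"
  assumes "Hausdorff_space X"
    and "is_lindelof_number X \<mu>L"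
    and "is_pseudocharacter X \<mu>P"
    and "is_Phi X \<Phi>"
  shows "ordIso2 \<Phi> (BNF_Cardinal_Arithmetic.cprod \<mu>L \<mu>P)"
proof -
  have iL: "inf_card \<mu>L" and lL: "lindelof_le X \<mu>L"
    and mL: "\<And>\<kappa>::'k rel. inf_card \<kappa> \<Longrightarrow> lindelof_le X \<kappa> \<Longrightarrow> \<mu>L \<le>o \<kappa>"
    using assms(2) unfolding is_lindelof_number_def by auto
  have iP: "inf_card \<mu>P" and pP: "pseudochar_le X \<mu>P"
    and mP: "\<And>\<kappa>::'k rel. inf_card \<kappa> \<Longrightarrow> pseudochar_le X \<kappa> \<Longrightarrow> \<mu>P \<le>o \<kappa>"
    using assms(3) unfolding is_pseudocharacter_def by auto
  have iF: "inf_card \<Phi>" and lF: "\<forall>x\<in>topspace X. lindelof_le (subtopology X (topspace X - {x})) \<Phi>"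
    and mF: "\<And>\<kappa>::'k rel. inf_card \<kappa> \<Longrightarrow> (\<forall>x\<in>topspace X. lindelof_le (subtopology X (topspace X - {x})) \<kappa>) \<Longrightarrow> \<Phi> \<le>o \<kappa>"
    using assms(4) unfolding is_Phi_def by auto
  have LF: "\<mu>L \<le>o \<Phi>" using mL[OF iF PhiL[OF iF lF]] .
  have PF: "\<mu>P \<le>o \<Phi>" using mP[OF iF PhiP[OF assms(1) iF lF]] .
  have ciL: "Cinfinite \<mu>L" using iL unfolding inf_card_def by (simp add: cinfinite_def)
  have nzL: "Cnotzero \<mu>L" by (rule Cinfinite_Cnotzero[OF ciL])
  have ciP: "Cinfinite \<mu>P" using iP unfolding inf_card_def by (simp add: cinfinite_def)
  have nzP: "Cnotzero \<mu>P" by (rule Cinfinite_Cnotzero[OF ciP])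
  have wo: "Well_order \<mu>L" "Well_order \<mu>P" using iL iP unfolding inf_card_def
    by (auto simp: card_order_on_def)
  obtain m where m: "m = \<mu>L \<or> m = \<mu>P" "\<mu>L \<le>o m" "\<mu>P \<le>o m" "ordIso2 (\<mu>L *c \<mu>P) m"
    using ordLeq_total[OF wo]
  proof
    assume "\<mu>L \<le>o \<mu>P"
    then show thesis using that[of \<mu>P] cprod_infinite2'[OF nzL ciP] ordLeq_reflexive wo by blast
  next
    assume "\<mu>P \<le>o \<mu>L"
    then show thesis using that[of \<mu>L] cprod_infinite1'[OF ciL nzP] ordLeq_reflexive wo by blast
  qed
  have im: "inf_card m" using m(1) iL iP by auto
  have "\<Phi> \<le>o m"
    by (rule mF[OF im]) (intro ballI keyK[OF im lind_mono[OF lL m(2)] psi_mono[OF pP m(3)]])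
  moreover have "m \<le>o \<Phi>" using m(1) LF PF by auto
  ultimately have "ordIso2 \<Phi> m" by (simp add: ordIso_iff_ordLeq)
  then show ?thesis using m(4) ordIso_symmetric ordIso_transitive by blast
qed

end
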